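(* Let $\mathbb{F}$ be a field, $\Gamma$ a finite abelian group written multiplicatively with unit $e$, and $M_1,M_2$ $\mathbb{F}$-representable matroids on a common ground set $E$ of the same rank $r$, with $A_k$ an $r\times E$ matrix over $\mathbb{F}$ representing $M_k$ ($k=1,2$). Let $\psi\colon E\to\Gamma$ be a labeling, let $D_\psi$ be the $E\times E$ diagonal matrix whose $(j,j)$ entry is $x_j\psi(j)$, where $\{x_j\}_{j\in E}$ are indeterminates, viewed as a matrix over the group ring $\mathbb{F}(\{x_j\}_{j\in E})[\Gamma]$, and let $\Xi:=A_1D_\psi A_2^\top$. Then for each $g\in\Gamma$, the coefficient of $g$ in $\det(\Xi)$ is a non-zero polynomial in $\{x_j\}_{j\in E}$ if and only if $M_1$ and $M_2$ have a common basis $B$ with $\prod_{j\in B}\psi(j)=g$.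
   Context: $A_k$ represents $M_k$ means the bases of $M_k$ are exactly the sets of columns forming a basis of the column space. The group ring $R[\Gamma]$ over a commutative ring $R$ is the set of formal sums $\sum_{g\in\Gamma}a_g g$ with $a_g\in R$, with the natural addition and multiplication $(\sum a_g g)(\sum b_h h)=\sum a_g b_h\,gh$; the coefficient of $g$ in $\det(\Xi)$ lies in $\mathbb{F}[\{x_j\}]$. *)

theory Defs
  imports "HOL-Analysis.Analysis" "HOL-Library.Poly_Mapping"
begin

text \<open>A matroid on the (finite) ground set UNIV of type 'e, given by its set of bases.\<close>
definition matroid_bases :: "'e set set \<Rightarrow> bool" where
  "matroid_bases Bs \<longleftrightarrow> Bs \<noteq> {} \<and>
     (\<forall>B1\<in>Bs. \<forall>B2\<in>Bs. \<forall>x\<in>B1 - B2. \<exists>y\<in>B2 - B1. insert y (B1 - {x}) \<in> Bs)"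

definition matroid_has_rank :: "'e set set \<Rightarrow> nat \<Rightarrow> bool" where
  "matroid_has_rank Bs r \<longleftrightarrow> (\<forall>B\<in>Bs. card B = r)"

definition column_basis :: "'a::field ^ 'e ^ 'r \<Rightarrow> 'e set \<Rightarrow> bool" where
  "column_basis A B \<longleftrightarrow> inj_on (\<lambda>j. column j A) B \<and>
     vec.independent ((\<lambda>j. column j A) ` B) \<and>
     vec.span ((\<lambda>j. column j A) ` B) = vec.span (columns A)"

definition represents :: "'a::field ^ 'e ^ 'r \<Rightarrow> 'e set set \<Rightarrow> bool" where
  "represents A Bs \<longleftrightarrow> Bs = {B. column_basis A B}"

type_synonym ('e, 'a) mpoly = "('e \<Rightarrow>\<^sub>0 nat) \<Rightarrow>\<^sub>0 'a"

definition mp_var :: "'e \<Rightarrow> ('e, 'a::{zero,one}) mpoly" where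
  "mp_var j = Poly_Mapping.single (Poly_Mapping.single j 1) 1"

definition mp_const :: "'a::zero \<Rightarrow> ('e, 'a) mpoly" where
  "mp_const c = Poly_Mapping.single 0 c"

text \<open>Group ring R[Gamma], Gamma written additively: element g is (single g 1).\<close>
definition gr_const :: "'a::field \<Rightarrow> ('g::zero \<Rightarrow>\<^sub>0 ('e, 'a) mpoly)" where
  "gr_const c = Poly_Mapping.single 0 (mp_const c)"

definition gr_matrix :: "'a::field ^ 'n ^ 'm \<Rightarrow> ('g::zero \<Rightarrow>\<^sub>0 ('e, 'a) mpoly) ^ 'n ^ 'm" where
  "gr_matrix A = (\<chi> i j. gr_const (A $ i $ j))"

definition D_psi :: "('e \<Rightarrow> 'g::zero) \<Rightarrow> ('g \<Rightarrow>\<^sub>0 ('e, 'a::field) mpoly) ^ 'e ^ 'e" where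
  "D_psi \<psi> = (\<chi> i j. if i = j then Poly_Mapping.single (\<psi> j) (mp_var j) else 0)"

definition Xi_matrix ::
  "'a::field ^ 'e::finite ^ 'r \<Rightarrow> 'a ^ 'e ^ 'r \<Rightarrow> ('e \<Rightarrow> 'g::comm_monoid_add)
     \<Rightarrow> ('g \<Rightarrow>\<^sub>0 ('e, 'a) mpoly) ^ 'r ^ 'r" where
  "Xi_matrix A1 A2 \<psi> = gr_matrix A1 ** D_psi \<psi> ** transpose (gr_matrix A2)"

end

theory Submission
  imports Defs
begin


lemma prod_single_pm:
  fixes k :: "'i \<Rightarrow> 'k::comm_monoid_add" and v :: "'i \<Rightarrow> 'v::comm_semiring_1"
  assumes "finite I"
  shows "(\<Prod>i\<in>I. Poly_Mapping.single (k i) (v i)) = Poly_Mapping.single (\<Sum>i\<in>I. k i) (\<Prod>i\<in>I. v i)"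
  using assms by (induction I rule: finite_induct) (simp_all add: mult_single)

lemma PiE_all: "PiE (UNIV::'i set) (\<lambda>_. UNIV) = (UNIV :: ('i \<Rightarrow> 'j) set)"
  by auto

lemma Xi_entry:
  fixes A1 A2 :: "'a::field ^ 'e::finite ^ 'r::finite" and \<psi> :: "'e \<Rightarrow> 'g::comm_monoid_add"
  shows "Xi_matrix A1 A2 \<psi> $ i $ k =
    (\<Sum>j\<in>UNIV. Poly_Mapping.single (\<psi> j) (Poly_Mapping.single (Poly_Mapping.single j 1) (A1$i$j * A2$k$j)))"
proof -
  have 1: "(gr_matrix A1 ** D_psi \<psi>) $ i $ j = Poly_Mapping.single (\<psi> j) (Poly_Mapping.single (Poly_Mapping.single j 1) (A1$i$j))" for j
    unfolding matrix_matrix_mult_def gr_matrix_def D_psi_def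
    by (simp add: if_distrib[of "\<lambda>x. _ * x"] gr_const_def mp_const_def mp_var_def mult_single cong: if_cong)
  show ?thesis
    unfolding Xi_matrix_def matrix_matrix_mult_def[of "gr_matrix A1 ** D_psi \<psi>"]
    apply (simp only: vec_lambda_beta 1)
    by (simp add: transpose_def gr_matrix_def gr_const_def mp_const_def mult_single)
qed

definition psum :: "('e \<Rightarrow> 'g::comm_monoid_add) \<Rightarrow> ('r::finite \<Rightarrow> 'e) \<Rightarrow> 'g" where
  "psum \<psi> f = (\<Sum>i\<in>UNIV. \<psi> (f i))"

definition mon :: "('r::finite \<Rightarrow> 'e) \<Rightarrow> 'e \<Rightarrow>\<^sub>0 nat" where
  "mon f = (\<Sum>i\<in>UNIV. Poly_Mapping.single (f i) 1)"

lemma lookup2_single: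
  "Poly_Mapping.lookup (Poly_Mapping.lookup (Poly_Mapping.single a (Poly_Mapping.single b c)) g) m =
   (if a = g \<and> b = m then c else 0)"
  by (simp add: lookup_single when_def)

lemma Xi_prod:
  fixes A1 A2 :: "'a::field ^ 'e::finite ^ 'r::finite" and \<psi> :: "'e \<Rightarrow> 'g::comm_monoid_add"
  shows "(\<Prod>i\<in>UNIV. Xi_matrix A1 A2 \<psi> $ i $ \<sigma> i) =
    (\<Sum>f\<in>UNIV. Poly_Mapping.single (psum \<psi> f) (Poly_Mapping.single (mon f)
        (\<Prod>i\<in>UNIV. A1$i$(f i) * A2$(\<sigma> i)$(f i))))"
  unfolding Xi_entry
  by (simp add: prod_sum_PiE PiE_all prod_single_pm psum_def mon_def)

lemma coeff_det:
  fixes A1 A2 :: "'a::field ^ 'e::finite ^ 'r::finite" and \<psi> :: "'e \<Rightarrow> 'g::comm_monoid_add"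
  shows "Poly_Mapping.lookup (Poly_Mapping.lookup (det (Xi_matrix A1 A2 \<psi>)) g) m =
    (\<Sum>f\<in>UNIV. if psum \<psi> f = g \<and> mon f = m then
        (\<Prod>i\<in>UNIV. A1$i$(f i)) * det (\<chi> i k. A2$k$(f i)) else 0)"
proof -
  let ?P = "{p. p permutes (UNIV::'r set)}"
  have e: "(of_int z :: 'g \<Rightarrow>\<^sub>0 ('e, 'a) mpoly) * Poly_Mapping.single a (Poly_Mapping.single b c)
       = Poly_Mapping.single a (Poly_Mapping.single b (of_int z * c))" for z a b c
  proof -
    have "(of_int z :: 'g \<Rightarrow>\<^sub>0 ('e, 'a) mpoly) = Poly_Mapping.single 0 (Poly_Mapping.single 0 (of_int z))"
      by simp
    then show ?thesis by (simp only: mult_single add_0_left)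
  qed
  have "Poly_Mapping.lookup (Poly_Mapping.lookup (det (Xi_matrix A1 A2 \<psi>)) g) m =
     (\<Sum>\<sigma>\<in>?P. \<Sum>f\<in>UNIV. if psum \<psi> f = g \<and> mon f = m then
        of_int (sign \<sigma>) * (\<Prod>i\<in>UNIV. A1$i$(f i) * A2$(\<sigma> i)$(f i)) else 0)"
    unfolding det_def Xi_prod e
    by (simp add: sum_distrib_left e lookup_sum lookup2_single
         cong: if_cong)
  also have "\<dots> = (\<Sum>f\<in>UNIV. \<Sum>\<sigma>\<in>?P. if psum \<psi> f = g \<and> mon f = m then
        of_int (sign \<sigma>) * (\<Prod>i\<in>UNIV. A1$i$(f i) * A2$(\<sigma> i)$(f i)) else 0)"
    by (rule sum.swap)
  also have "\<dots> = (\<Sum>f\<in>UNIV. if psum \<psi> f = g \<and> mon f = m then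
        (\<Prod>i\<in>UNIV. A1$i$(f i)) * det (\<chi> i k. A2$k$(f i)) else 0)"
  proof (rule sum.cong[OF refl])
    fix f :: "'r \<Rightarrow> 'e"
    show "(\<Sum>\<sigma>\<in>?P. if psum \<psi> f = g \<and> mon f = m then
        of_int (sign \<sigma>) * (\<Prod>i\<in>UNIV. A1$i$(f i) * A2$(\<sigma> i)$(f i)) else 0) =
        (if psum \<psi> f = g \<and> mon f = m then
        (\<Prod>i\<in>UNIV. A1$i$(f i)) * det (\<chi> i k. A2$k$(f i)) else 0)"
      by (cases "psum \<psi> f = g"; cases "mon f = m") (simp_all add: det_def prod.distrib sum_distrib_left mult_ac)
  qed
  finally show ?thesis .
qed



definition sub :: "'a::field ^ 'e ^ 'r \<Rightarrow> ('r \<Rightarrow> 'e) \<Rightarrow> 'a ^ 'r ^ 'r" where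
  "sub A f = (\<chi> i l. A$i$(f l))"

lemma column_sub: "column l (sub A f) = column (f l) A"
  by (simp add: sub_def column_def)

lemma columns_sub: "columns (sub A f) = (\<lambda>j. column j A) ` range f"
  by (auto simp: columns_def column_sub)

lemma LA:
  fixes A :: "'a::field ^ 'e::finite ^ 'r::finite" and f0 :: "'r \<Rightarrow> 'e"
  assumes inj: "inj f0"
  shows "det (sub A f0) \<noteq> 0 \<longleftrightarrow> column_basis A (range f0)"
proof -
  let ?N = "sub A f0"
  let ?h = "\<lambda>l. column (f0 l) A"
  have img: "(\<lambda>j. column j A) ` range f0 = range ?h" by auto
  have fin: "finite (range ?h)" by simp
  have depf: "vec.dependent (range ?h) \<longleftrightarrow> (\<exists>u. (\<exists>v\<in>range ?h. u v \<noteq> 0) \<and> (\<Sum>v\<in>range ?h. u v *s v) = 0)"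
    by (rule vec.dependent_finite[OF fin])
  have sumre: "(\<Sum>v\<in>range ?h. u v *s v) = (\<Sum>l\<in>UNIV. u (?h l) *s column l ?N)" if "inj ?h" for u
    using sum.reindex[OF that, of "\<lambda>v. u v *s v"] by (simp add: column_sub)
  show ?thesis
  proof
    assume d: "det ?N \<noteq> 0"
    then have inv: "invertible ?N" by (simp add: invertible_det_nz)
    have injh: "inj ?h"
    proof (rule injI, rule ccontr)
      fix a b assume e: "?h a = ?h b" "a \<noteq> b"
      then have "column a ?N = column b ?N" by (simp add: column_sub)
      with det_identical_columns[OF e(2), of ?N] d show False by simp
    qed
    then have injc: "inj_on (\<lambda>j. column j A) (range f0)"
      by (auto simp: inj_on_def inj_def)
    from inv have "\<exists>B. B ** ?N = mat 1" by (simp only: invertible_left_inverse)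
    then have li: "\<forall>c. (\<Sum>l\<in>UNIV. c l *s column l ?N) = 0 \<longrightarrow> (\<forall>i. c i = 0)"
      by (simp only: matrix_left_invertible_independent_columns)
    have ind: "vec.independent (range ?h)"
    proof
      assume "vec.dependent (range ?h)"
      then have "\<exists>u. (\<exists>v\<in>range ?h. u v \<noteq> 0) \<and> (\<Sum>v\<in>range ?h. u v *s v) = 0"
        by (simp only: depf)
      then obtain u where u: "\<exists>v\<in>range ?h. u v \<noteq> 0" "(\<Sum>v\<in>range ?h. u v *s v) = 0"
        by (elim exE conjE)
      then have "(\<Sum>l\<in>UNIV. u (?h l) *s column l ?N) = 0" using sumre[OF injh] by simp
      then have "\<forall>l. u (?h l) = 0" using li[rule_format, of "\<lambda>l. u (?h l)"] by simp
      with u(1) show False by auto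
    qed
    from inv have "\<exists>C. ?N ** C = mat 1" by (simp only: invertible_right_inverse)
    then have "vec.span (columns ?N) = UNIV"
      by (simp only: matrix_right_invertible_span_columns)
    then have sp: "vec.span (range ?h) = UNIV"
      by (simp only: columns_sub img)
    have "vec.span (columns A) = UNIV"
    proof -
      have "range ?h \<subseteq> columns A" by (auto simp: columns_def)
      then have "vec.span (range ?h) \<subseteq> vec.span (columns A)" by (rule vec.span_mono)
      with sp show ?thesis by auto
    qed
    with injc ind sp img show "column_basis A (range f0)"
      unfolding column_basis_def by simp
  next
    assume cb: "column_basis A (range f0)"
    then have injc: "inj_on (\<lambda>j. column j A) (range f0)" and ind: "vec.independent (range ?h)"
      unfolding column_basis_def img by auto
    have injh: "inj ?h" using injc inj by (auto simp: inj_on_def inj_def)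
    have "\<forall>c. (\<Sum>l\<in>UNIV. c l *s column l ?N) = 0 \<longrightarrow> (\<forall>i. c i = 0)"
    proof (intro allI impI)
      fix c i assume s: "(\<Sum>l\<in>UNIV. c l *s column l ?N) = 0"
      let ?u = "\<lambda>v. c (inv ?h v)"
      have sz: "(\<Sum>v\<in>range ?h. ?u v *s v) = 0"
        using s sumre[OF injh, of ?u] by (simp add: inv_f_f[OF injh])
      have "\<forall>v\<in>range ?h. ?u v = 0"
      proof (rule ccontr)
        assume "\<not> (\<forall>v\<in>range ?h. ?u v = 0)"
        then have "\<exists>v\<in>range ?h. ?u v \<noteq> 0" by simp
        with sz have "vec.dependent (range ?h)" unfolding depf by (intro exI[of _ ?u] conjI)
        with ind show False by simp
      qed
      then have "c (inv ?h (?h i)) = 0" by blast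
      moreover have e: "inv ?h (?h i) = i" by (rule inv_f_f[OF injh])
      ultimately show "c i = 0" by simp
    qed
    then have "\<exists>B. B ** ?N = mat 1"
      by (simp only: matrix_left_invertible_independent_columns)
    then have "invertible ?N" by (simp only: invertible_left_inverse)
    then show "det ?N \<noteq> 0" by (simp add: invertible_det_nz)
  qed
qed



lemma sum_reindex_range:
  fixes f :: "'r::finite \<Rightarrow> 'e"
  assumes "inj f"
  shows "(\<Sum>i\<in>UNIV. h (f i)) = (\<Sum>j\<in>range f. h j)"
  using sum.reindex[of f UNIV h] assms by simp

lemma lookup_monset:
  assumes "finite S"
  shows "Poly_Mapping.lookup (\<Sum>j\<in>S. Poly_Mapping.single j (c::nat)) x = (if x \<in> S then c else 0)"
  using assms by (simp add: lookup_sum lookup_single when_def)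

lemma mon_eq:
  fixes f f0 :: "'r::finite \<Rightarrow> 'e"
  assumes "inj f" "inj f0"
  shows "mon f = mon f0 \<longleftrightarrow> range f = range f0"
proof
  assume e: "mon f = mon f0"
  have "x \<in> range f \<longleftrightarrow> x \<in> range f0" for x
  proof -
    have "Poly_Mapping.lookup (mon f) x = Poly_Mapping.lookup (mon f0) x" using e by simp
    then show ?thesis
      unfolding mon_def sum_reindex_range[OF assms(1), of "\<lambda>j. Poly_Mapping.single j 1"]
        sum_reindex_range[OF assms(2), of "\<lambda>j. Poly_Mapping.single j 1"]
      by (simp add: lookup_monset split: if_splits)
  qed
  then show "range f = range f0" by blast
next
  assume "range f = range f0"
  then show "mon f = mon f0"
    unfolding mon_def sum_reindex_range[OF assms(1), of "\<lambda>j. Poly_Mapping.single j 1"]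
        sum_reindex_range[OF assms(2), of "\<lambda>j. Poly_Mapping.single j 1"] by simp
qed

lemma noninj_det:
  fixes A2 :: "'a::field ^ 'e::finite ^ 'r::finite"
  assumes "\<not> inj f"
  shows "det (\<chi> i k. A2$k$(f i)) = 0"
proof -
  from assms obtain a b where "a \<noteq> b" "f a = f b" by (auto simp: inj_def)
  then show ?thesis
    by (intro det_identical_rows[of a b]) (auto simp: row_def)
qed

lemma bij_perm_comp:
  fixes f0 :: "'r::finite \<Rightarrow> 'e"
  assumes inj: "inj f0"
  shows "bij_betw (\<lambda>p. f0 \<circ> p) {p. p permutes (UNIV::'r set)} {f. inj f \<and> range f = range f0}"
  unfolding bij_betw_def
proof (intro conjI)
  show "inj_on (\<lambda>p. f0 \<circ> p) {p. p permutes UNIV}"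
  proof (rule inj_onI)
    fix p q :: "'r \<Rightarrow> 'r" assume "f0 \<circ> p = f0 \<circ> q"
    then show "p = q" using inj by (auto simp: fun_eq_iff inj_def)
  qed
  show "(\<lambda>p. f0 \<circ> p) ` {p. p permutes UNIV} = {f. inj f \<and> range f = range f0}"
  proof (intro equalityI subsetI)
    fix f assume "f \<in> (\<lambda>p. f0 \<circ> p) ` {p. p permutes UNIV}"
    then obtain p where p: "p permutes UNIV" "f = f0 \<circ> p" by auto
    have "inj p" using p(1) by (rule permutes_inj)
    moreover have "p ` UNIV = UNIV" using p(1) by (rule permutes_image)
    ultimately have "inj f" using p(2) inj by (simp add: inj_compose)
    moreover have "range f = range f0" using p(2) \<open>p ` UNIV = UNIV\<close> by (metis image_comp)
    ultimately show "f \<in> {f. inj f \<and> range f = range f0}" by simp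
  next
    fix f :: "'r \<Rightarrow> 'e" assume f: "f \<in> {f. inj f \<and> range f = range f0}"
    let ?p = "inv f0 \<circ> f"
    have ff: "f0 \<circ> ?p = f"
    proof
      fix x
      have "f x \<in> range f0" using f by auto
      then show "(f0 \<circ> ?p) x = f x" by (simp add: f_inv_into_f)
    qed
    have "inj_on (inv f0) (f ` UNIV)" using f by (auto intro: inj_on_inv_into)
    then have "inj ?p" using f by (auto intro: comp_inj_on)
    then have "bij ?p" using finite_UNIV_inj_surj[of ?p] by (simp add: bij_def)
    then have "?p permutes UNIV" by (intro bij_imp_permutes) auto
    then have "?p \<in> {p. p permutes UNIV}" by simp
    from image_eqI[where f="\<lambda>p. f0 \<circ> p", OF ff[symmetric] this] show "f \<in> (\<lambda>p. f0 \<circ> p) ` {p. p permutes UNIV}" .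
  qed
qed

lemma coeff_X:
  fixes A1 A2 :: "'a::field ^ 'e::finite ^ 'r::finite" and \<psi> :: "'e \<Rightarrow> 'g::comm_monoid_add"
    and f0 :: "'r \<Rightarrow> 'e"
  assumes inj: "inj f0"
  shows "(\<Sum>f\<in>UNIV. if psum \<psi> f = g \<and> mon f = mon f0 then
        (\<Prod>i\<in>UNIV. A1$i$(f i)) * det (\<chi> i k. A2$k$(f i)) else 0) =
      (if psum \<psi> f0 = g then det (sub A1 f0) * det (sub A2 f0) else 0)"
proof -
  let ?S = "{f::'r \<Rightarrow> 'e. inj f \<and> range f = range f0}"
  let ?P = "{p. p permutes (UNIV::'r set)}"
  let ?T = "\<lambda>f::'r \<Rightarrow> 'e. if psum \<psi> f = g \<and> mon f = mon f0 then
        (\<Prod>i\<in>UNIV. A1$i$(f i)) * det (\<chi> i k. A2$k$(f i)) else 0"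
  have zero: "\<forall>f\<in>UNIV - ?S. ?T f = 0"
    proof
      fix f :: "'r \<Rightarrow> 'e" assume "f \<in> UNIV - ?S"
      then have "\<not> inj f \<or> (inj f \<and> range f \<noteq> range f0)" by auto
      then show "?T f = 0"
      proof
        assume "\<not> inj f" then show ?thesis by (simp add: noninj_det)
      next
        assume "inj f \<and> range f \<noteq> range f0"
        then have "mon f \<noteq> mon f0" using mon_eq[OF _ inj, of f] by simp
        then show ?thesis by simp
      qed
    qed
  have "(\<Sum>f\<in>UNIV. ?T f) = (\<Sum>f\<in>?S. ?T f)"
    by (rule sum.mono_neutral_right[OF finite subset_UNIV zero])
  also have "\<dots> = (\<Sum>p\<in>?P. ?T (f0 \<circ> p))"
    by (rule sum.reindex_bij_betw[OF bij_perm_comp[OF inj], symmetric])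
  also have "\<dots> = (\<Sum>p\<in>?P. if psum \<psi> f0 = g then
      det (sub A2 f0) * (of_int (sign p) * (\<Prod>i\<in>UNIV. A1$i$(f0 (p i)))) else 0)"
  proof (rule sum.cong[OF refl])
    fix p assume "p \<in> ?P"
    then have p: "p permutes (UNIV::'r set)" by simp
    have ps: "psum \<psi> (f0 \<circ> p) = psum \<psi> f0"
      unfolding psum_def using sum.permute[OF p, of "\<lambda>i. \<psi> (f0 i)"] by (simp add: o_def)
    have ms: "mon (f0 \<circ> p) = mon f0"
      unfolding mon_def using sum.permute[OF p, of "\<lambda>i. Poly_Mapping.single (f0 i) 1"] unfolding o_def by (rule sym)
    have "(\<chi> i k. A2$k$((f0 \<circ> p) i)) = (\<chi> i. (\<chi> i k. A2$k$(f0 i)) $ p i)"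
      by (simp add: vec_eq_iff)
    then have dp: "det (\<chi> i k. A2$k$((f0 \<circ> p) i)) = of_int (sign p) * det (sub A2 f0)"
    proof -
      have "det (\<chi> i k. A2$k$(f0 i)) = det (transpose (sub A2 f0))"
        by (rule arg_cong[where f=det]) (simp add: vec_eq_iff transpose_def sub_def)
      then show ?thesis using \<open>(\<chi> i k. A2$k$((f0 \<circ> p) i)) = _\<close> det_permute_rows[OF p, of "\<chi> i k. A2$k$(f0 i)"]
        by simp
    qed
    show "?T (f0 \<circ> p) = (if psum \<psi> f0 = g then
      det (sub A2 f0) * (of_int (sign p) * (\<Prod>i\<in>UNIV. A1$i$(f0 (p i)))) else 0)"
      using ps ms dp by (simp add: mult_ac)
  qed
  also have "\<dots> = (if psum \<psi> f0 = g then det (sub A1 f0) * det (sub A2 f0) else 0)"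
  proof -
    have "det (sub A1 f0) = (\<Sum>p\<in>?P. of_int (sign p) * (\<Prod>i\<in>UNIV. A1$i$(f0 (p i))))"
      by (simp add: det_def sub_def)
    then show ?thesis by (simp add: sum_distrib_left mult_ac)
  qed
  finally show ?thesis .
qed



theorem lemma4p2:
  fixes A1 A2 :: "'a::field ^ 'e::finite ^ 'r::finite"
    and M1 M2 :: "'e set set"
    and \<psi> :: "'e \<Rightarrow> 'g::{ab_group_add, finite}"
    and g :: 'g
  assumes "matroid_bases M1" and "matroid_bases M2"
    and "matroid_has_rank M1 CARD('r)" and "matroid_has_rank M2 CARD('r)"
    and "represents A1 M1" and "represents A2 M2"
  shows "Poly_Mapping.lookup (det (Xi_matrix A1 A2 \<psi>)) g \<noteq> 0 \<longleftrightarrow>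
         (\<exists>B. B \<in> M1 \<and> B \<in> M2 \<and> (\<Sum>j\<in>B. \<psi> j) = g)"
proof
  assume nz: "Poly_Mapping.lookup (det (Xi_matrix A1 A2 \<psi>)) g \<noteq> 0"
  have "\<exists>m. Poly_Mapping.lookup (Poly_Mapping.lookup (det (Xi_matrix A1 A2 \<psi>)) g) m \<noteq> 0"
  proof (rule ccontr)
    assume "\<nexists>m. Poly_Mapping.lookup (Poly_Mapping.lookup (det (Xi_matrix A1 A2 \<psi>)) g) m \<noteq> 0"
    then have "Poly_Mapping.lookup (det (Xi_matrix A1 A2 \<psi>)) g = 0"
      by (intro poly_mapping_eqI) simp
    with nz show False by simp
  qed
  then obtain m where m: "Poly_Mapping.lookup (Poly_Mapping.lookup (det (Xi_matrix A1 A2 \<psi>)) g) m \<noteq> 0"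
    by blast
  then have "(\<Sum>f\<in>UNIV. if psum \<psi> f = g \<and> mon f = m then
        (\<Prod>i\<in>UNIV. A1$i$(f i)) * det (\<chi> i k. A2$k$(f i)) else 0) \<noteq> 0"
    by (simp add: coeff_det)
  then obtain f where f: "(if psum \<psi> f = g \<and> mon f = m then
        (\<Prod>i\<in>UNIV. A1$i$(f i)) * det (\<chi> i k. A2$k$(f i)) else 0) \<noteq> 0"
    using sum.not_neutral_contains_not_neutral by blast
  then have fg: "psum \<psi> f = g" and fm: "mon f = m"
    and "det (\<chi> i k. A2$k$(f i)) \<noteq> 0"
    by (auto split: if_splits)
  then have injf: "inj f" using noninj_det by blast
  from m have "(\<Sum>f'\<in>UNIV. if psum \<psi> f' = g \<and> mon f' = mon f then
        (\<Prod>i\<in>UNIV. A1$i$(f' i)) * det (\<chi> i k. A2$k$(f' i)) else 0) \<noteq> 0"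
    by (simp add: coeff_det fm)
  then have "det (sub A1 f) * det (sub A2 f) \<noteq> 0"
    unfolding coeff_X[OF injf] using fg by simp
  then have "column_basis A1 (range f)" "column_basis A2 (range f)"
    using LA[OF injf] by auto
  then have "range f \<in> M1" "range f \<in> M2"
    using assms(5,6) by (auto simp: represents_def)
  moreover have "(\<Sum>j\<in>range f. \<psi> j) = g"
    using fg sum_reindex_range[OF injf, of \<psi>] by (simp add: psum_def)
  ultimately show "\<exists>B. B \<in> M1 \<and> B \<in> M2 \<and> (\<Sum>j\<in>B. \<psi> j) = g" by blast
next
  assume "\<exists>B. B \<in> M1 \<and> B \<in> M2 \<and> (\<Sum>j\<in>B. \<psi> j) = g"
  then obtain B where B: "B \<in> M1" "B \<in> M2" "(\<Sum>j\<in>B. \<psi> j) = g" by blast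
  have "card B = CARD('r)" using B(1) assms(3) by (simp add: matroid_has_rank_def)
  then obtain h :: "'r \<Rightarrow> 'e" where h: "bij_betw h UNIV B"
    using finite_same_card_bij[of "UNIV::'r set" B] by auto
  then have injh: "inj h" and rh: "range h = B" by (auto simp: bij_betw_def)
  have "column_basis A1 B" "column_basis A2 B"
    using B assms(5,6) by (auto simp: represents_def)
  then have "det (sub A1 h) \<noteq> 0" "det (sub A2 h) \<noteq> 0"
    using LA[OF injh] rh by auto
  moreover have "psum \<psi> h = g"
    using B(3) sum_reindex_range[OF injh, of \<psi>] rh by (simp add: psum_def)
  ultimately have "Poly_Mapping.lookup (Poly_Mapping.lookup (det (Xi_matrix A1 A2 \<psi>)) g) (mon h) \<noteq> 0"
    unfolding coeff_det coeff_X[OF injh] by simp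
  then show "Poly_Mapping.lookup (det (Xi_matrix A1 A2 \<psi>)) g \<noteq> 0" by auto
qed


end
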